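(* For every integer partition $\lambda$ there exists a unique elementary interval bipartition $(\mathbf L,\mathbf R)$ such that $\lambda=\boldsymbol\lambda(\mathbf L,\mathbf R)$.
   Context: A bipartition of a set $\mathbf A$ is an ordered pair $(\mathbf L,\mathbf R)$ with $\mathbf L\cup\mathbf R=\mathbf A$, $\mathbf L\cap\mathbf R=\varnothing$. An interval bipartition is a bipartition of an interval $\{i,\dots,j\}$ of $\mathbb{N}^*$ (or of $\varnothing$); it is elementary if either $\mathbf L=\mathbf R=\varnothing$, or $1\in\mathbf L$ and $\max(\mathbf L\cup\mathbf R)\in\mathbf R$. For $\mathbf L=\{\ell_1<\dots<\ell_p\}$ nonempty, $\boldsymbol\lambda(\mathbf L,\mathbf R)$ is the integer partition with $\boldsymbol\lambda(\mathbf L,\mathbf R)_i=\#\{r\in\mathbf R:\ell_i<r\}$ (zero parts discarded); if $\mathbf L=\varnothing$, $\boldsymbol\lambda(\mathbf L,\mathbf R)=(0)$. The empty partition is $(0)$. *)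

theory Defs
  imports Main
begin

text \<open>Integer partitions: weakly decreasing lists of positive integers.
  The empty partition (written (0) in the paper) is the empty list.\<close>
definition integer_partition :: "nat list \<Rightarrow> bool" where
  "integer_partition xs \<longleftrightarrow> sorted_wrt (\<ge>) xs \<and> (\<forall>x\<in>set xs. 0 < x)"

definition bipartition_of :: "nat set \<times> nat set \<Rightarrow> nat set \<Rightarrow> bool" where
  "bipartition_of LR A \<longleftrightarrow> fst LR \<union> snd LR = A \<and> fst LR \<inter> snd LR = {}"

definition pos_interval :: "nat set \<Rightarrow> bool" where
  "pos_interval A \<longleftrightarrow> A = {} \<or> (\<exists>i j. 1 \<le> i \<and> i \<le> j \<and> A = {i..j})"

definition interval_bipartition :: "nat set \<times> nat set \<Rightarrow> bool" where
  "interval_bipartition LR \<longleftrightarrow> (\<exists>A. pos_interval A \<and> bipartition_of LR A)"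

definition elementary :: "nat set \<times> nat set \<Rightarrow> bool" where
  "elementary LR \<longleftrightarrow> interval_bipartition LR \<and>
     ((fst LR = {} \<and> snd LR = {}) \<or>
      (1 \<in> fst LR \<and> Max (fst LR \<union> snd LR) \<in> snd LR))"

definition lam :: "nat set \<times> nat set \<Rightarrow> nat list" where
  "lam LR = filter (\<lambda>k. 0 < k)
     (map (\<lambda>l. card {r \<in> snd LR. l < r}) (sorted_list_of_set (fst LR)))"

end

theory Submission
  imports Defs
begin

lemma card_greater_sorted:
  assumes "finite L" "k < card L"
  shows "card {l\<in>L. sorted_list_of_set L ! k < l} = card L - 1 - k"
proof -
  define ls where "ls = sorted_list_of_set L"
  have st: "sorted_wrt (<) ls" unfolding ls_def by (rule strict_sorted_list_of_set)
  have set: "set ls = L" using assms unfolding ls_def by simp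
  have len: "length ls = card L" using assms unfolding ls_def by simp
  have dist: "distinct ls" unfolding ls_def by simp
  have "{l\<in>L. ls ! k < l} = (!) ls ` {Suc k..<length ls}"
  proof (rule set_eqI, rule iffI)
    fix x assume "x \<in> {l\<in>L. ls ! k < l}"
    then have x: "x \<in> set ls" "ls ! k < x" using set by auto
    then obtain j where j: "j < length ls" "x = ls ! j" by (metis in_set_conv_nth)
    have "\<not> j \<le> k"
    proof
      assume "j \<le> k"
      then have "ls ! j \<le> ls ! k" using st assms len
        by (cases "j = k") (auto dest: sorted_wrt_nth_less[of "(<)" ls j k])
      then show False using x j by simp
    qed
    then show "x \<in> (!) ls ` {Suc k..<length ls}" using j by auto
  next
    fix x assume "x \<in> (!) ls ` {Suc k..<length ls}"
    then obtain j where j: "Suc k \<le> j" "j < length ls" "x = ls ! j" by auto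
    then have "ls ! k < ls ! j" using st by (simp add: sorted_wrt_nth_less)
    then show "x \<in> {l\<in>L. ls ! k < l}" using j set by auto
  qed
  moreover have "card ((!) ls ` {Suc k..<length ls}) = length ls - Suc k"
    by (subst card_image) (auto intro: inj_on_nth dist)
  ultimately show ?thesis using len unfolding ls_def by simp
qed

lemma card_R_greater:
  assumes "L \<union> R = {1..n}" "L \<inter> R = {}" "l \<in> L"
  shows "card {r\<in>R. l < r} + card {x\<in>L. l < x} = n - l"
proof -
  have "{l<..n} = {r\<in>R. l < r} \<union> {x\<in>L. l < x}" using assms(1,3) by auto
  moreover have "finite {r\<in>R. l < r}" "finite {x\<in>L. l < x}"
    by (rule finite_subset[of _ "{1..n}"], use assms(1) in auto)+
  ultimately have "card {l<..n} = card {r\<in>R. l < r} + card {x\<in>L. l < x}"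
    using assms(2) by (subst card_Un_disjoint[symmetric]) auto
  then show ?thesis by simp
qed

definition canonL :: "nat list \<Rightarrow> nat set" where
  "canonL xs = (\<lambda>i. xs!0 - xs!i + i + 1) ` {..<length xs}"

definition canon :: "nat list \<Rightarrow> nat set \<times> nat set" where
  "canon xs = (if xs = [] then ({},{}) else
     (canonL xs, {1..xs!0 + length xs} - canonL xs))"

lemma lam_empty: "lam ({},{}) = []"
  unfolding lam_def by simp

lemma part_nth:
  assumes "integer_partition xs" "i \<le> j" "j < length xs"
  shows "xs ! j \<le> xs ! i" "0 < xs ! j"
proof -
  show "xs ! j \<le> xs ! i" using assms unfolding integer_partition_def
    by (cases "i = j") (auto dest: sorted_wrt_nth_less[of "(\<ge>)" xs i j])
  show "0 < xs ! j" using assms unfolding integer_partition_def by auto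
qed

lemma canon_unique:
  assumes part: "integer_partition xs" and el: "elementary LR" and lm: "lam LR = xs"
  shows "LR = canon xs"
proof (cases "xs = []")
  case True
  obtain L R where LR: "LR = (L, R)" by fastforce
  show ?thesis
  proof (cases "L = {} \<and> R = {}")
    case True then show ?thesis using LR \<open>xs = []\<close> by (simp add: canon_def)
  next
    case False
    then have one: "1 \<in> L" and mx: "Max (L \<union> R) \<in> R" using el LR unfolding elementary_def by auto
    obtain A where A: "pos_interval A" "L \<union> R = A" "L \<inter> R = {}"
      using el LR unfolding elementary_def interval_bipartition_def bipartition_of_def by auto
    have fin: "finite L" "finite R" using A(1,2) unfolding pos_interval_def
      by (metis finite_Un finite_atLeastAtMost infinite_imp_nonempty)+
    have "1 < Max (L \<union> R)" using one mx fin A(3)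
      by (metis Max_ge UnI1 disjoint_iff finite_UnI le_neq_implies_less)
    then have "card {r\<in>R. 1 < r} > 0" using fin mx by (subst card_gt_0_iff) auto
    moreover have "1 \<in> set (sorted_list_of_set L)" using fin one by simp
    ultimately have "lam LR \<noteq> []" unfolding lam_def LR
      by (auto simp: filter_empty_conv)
    then show ?thesis using lm True by simp
  qed
next
  case False
  obtain L R where LR: "LR = (L, R)" by fastforce
  have ne: "\<not> (L = {} \<and> R = {})" using False lm LR lam_empty by auto
  then have one: "1 \<in> L" and mx: "Max (L \<union> R) \<in> R" using el LR unfolding elementary_def by auto
  obtain A where A: "pos_interval A" "L \<union> R = A" "L \<inter> R = {}"
    using el LR unfolding elementary_def interval_bipartition_def bipartition_of_def by auto
  obtain i n where "1 \<le> i" "i \<le> n" "A = {i..n}" using A(1,2) one unfolding pos_interval_def by auto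
  then have An: "L \<union> R = {1..n}" using A(2) one by (metis UnI1 atLeastAtMost_iff le_antisym)
  have fin: "finite L" by (rule finite_subset[of _ "{1..n}"]) (use An in auto)
  have n1: "1 \<le> n" using An one by auto
  have maxn: "Max (L \<union> R) = n" unfolding An using n1 by (intro Max_eqI) auto
  have nR: "n \<in> R" "n \<notin> L" using mx maxn A(3) by auto
  define ls where "ls = sorted_list_of_set L"
  define p where "p = length ls"
  have pc: "p = card L" using fin unfolding p_def ls_def by simp
  have setls: "set ls = L" using fin unfolding ls_def by simp
  have st: "sorted_wrt (<) ls" unfolding ls_def by (rule strict_sorted_list_of_set)
  define f where "f = (\<lambda>l. card {r \<in> R. l < r})"
  have lsk: "ls ! k \<in> L" if "k < p" for k using that setls p_def nth_mem by blast
  have eq: "f (ls ! k) + (p - 1 - k) = n - ls ! k" if "k < p" for k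
    using card_R_greater[OF An A(3) lsk[OF that]] card_greater_sorted[OF fin, of k] that pc
    unfolding f_def ls_def by simp
  have pos: "0 < f l" if "l \<in> L" for l
  proof -
    have "l \<le> n" "l \<noteq> n" using that An nR by auto
    then have "n \<in> {r \<in> R. l < r}" using nR by auto
    moreover have "finite {r \<in> R. l < r}" by (rule finite_subset[of _ "{1..n}"]) (use An in auto)
    ultimately show ?thesis unfolding f_def by (auto simp: card_gt_0_iff)
  qed
  have "lam LR = filter (\<lambda>k. 0 < k) (map f ls)" unfolding LR lam_def f_def ls_def by simp
  also have "\<dots> = map f ls" using pos setls by (auto simp: filter_id_conv)
  finally have xsm: "xs = map f ls" using lm by simp
  have lenxs: "length xs = p" using xsm p_def by simp
  have xk: "xs ! k = f (ls ! k)" if "k < p" for k using xsm that p_def by simp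
  have p0: "0 < p" using lenxs False by (metis length_greater_0_conv)
  have ls0: "ls ! 0 = 1"
  proof -
    obtain j where j: "j < p" "ls ! j = 1" using one setls p_def by (metis in_set_conv_nth)
    have "ls ! 0 \<le> ls ! j" using st j by (cases "j = 0") (auto dest: sorted_wrt_nth_less[of "(<)" ls 0 j] simp: p_def)
    moreover have "1 \<le> ls ! 0" using lsk[OF p0] An by auto
    ultimately show ?thesis using j by simp
  qed
  have nx: "n = xs ! 0 + p" using eq[OF p0] xk[OF p0] ls0 p0 n1 by simp
  have lsv: "ls ! k = xs!0 - xs!k + k + 1" if "k < p" for k
  proof -
    have "xs ! k \<le> xs ! 0" using part_nth(1)[OF part, of 0 k] that lenxs by simp
    moreover have "ls ! k \<le> n" using lsk[OF that] An by auto
    ultimately show ?thesis using eq[OF that] xk[OF that] nx that by linarith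
  qed
  have "L = canonL xs"
  proof -
    have "L = (!) ls ` {..<p}" unfolding setls[symmetric] p_def by (auto simp: set_conv_nth)
    also have "\<dots> = canonL xs" unfolding canonL_def lenxs using lsv by (intro image_cong) auto
    finally show ?thesis .
  qed
  moreover have "R = {1..n} - L" using An A(3) by auto
  ultimately show ?thesis using LR False nx lenxs unfolding canon_def by simp
qed

lemma canon_works:
  assumes part: "integer_partition xs"
  shows "elementary (canon xs) \<and> lam (canon xs) = xs"
proof (cases "xs = []")
  case True
  then show ?thesis unfolding canon_def elementary_def interval_bipartition_def
      bipartition_of_def pos_interval_def using lam_empty by auto
next
  case False
  define p where "p = length xs"
  define n where "n = xs!0 + p"
  define g where "g = (\<lambda>i. xs!0 - xs!i + i + 1)"
  define L where "L = canonL xs"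
  define R where "R = {1..n} - L"
  have p0: "0 < p" using False p_def by simp
  have LR: "canon xs = (L, R)" using False unfolding canon_def L_def R_def n_def p_def by simp
  have Lg: "L = g ` {..<p}" unfolding L_def canonL_def g_def p_def by simp
  have le0: "xs!i \<le> xs!0" "0 < xs!i" if "i < p" for i
    using part_nth[OF part, of 0 i] that p_def by auto
  have gmono: "g i < g j" if "i < j" "j < p" for i j
  proof -
    have "xs!j \<le> xs!i" using part_nth[OF part, of i j] that p_def by auto
    then show ?thesis unfolding g_def using that le0[of i] le0[of j] by simp
  qed
  have grange: "1 \<le> g i" "g i < n" if "i < p" for i
    using le0[OF that] that unfolding g_def n_def by auto
  have LA: "L \<subseteq> {1..n}" using Lg grange by fastforce
  have An: "L \<union> R = {1..n}" "L \<inter> R = {}" using LA unfolding R_def by auto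
  have fin: "finite L" using Lg by simp
  define ls where "ls = map g [0..<p]"
  have lsst: "sorted_wrt (<) ls" unfolding ls_def
    by (auto simp: sorted_wrt_iff_nth_less gmono)
  have lsset: "set ls = L" unfolding ls_def Lg by auto
  have lsdist: "distinct ls" using lsst by (simp add: strict_sorted_iff)
  have cardL: "card L = p" using lsset lsdist distinct_card[of ls] unfolding ls_def by auto
  have sls: "sorted_list_of_set L = ls"
    using sorted_list_of_set_unique[OF fin, of ls] lsst lsset cardL unfolding ls_def by simp
  have one: "1 \<in> L" using Lg p0 unfolding g_def by force
  have nL: "n \<notin> L" using Lg grange by auto
  have n1: "1 \<le> n" unfolding n_def using p0 by simp
  have maxn: "Max (L \<union> R) = n" unfolding An using n1 by (intro Max_eqI) auto
  have el: "elementary (L, R)"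
    unfolding elementary_def interval_bipartition_def bipartition_of_def pos_interval_def
    using An one nL maxn n1 by auto
  define f where "f = (\<lambda>l. card {r \<in> R. l < r})"
  have fk: "f (ls ! k) = xs ! k" if "k < p" for k
  proof -
    have lk: "ls ! k = g k" using that unfolding ls_def by simp
    have "ls ! k \<in> L" using lsset that ls_def by (metis length_map length_upt minus_nat.diff_0 nth_mem)
    from card_R_greater[OF An this] card_greater_sorted[OF fin, of k] that cardL sls
    have "f (ls ! k) + (p - 1 - k) = n - ls ! k" unfolding f_def by simp
    then show ?thesis using lk le0[OF that] that unfolding g_def n_def by simp
  qed
  have mf: "map f ls = xs"
  proof (rule nth_equalityI)
    show "length (map f ls) = length xs" unfolding ls_def p_def by simp
    fix i assume "i < length (map f ls)"
    then have i: "i < p" unfolding ls_def by simp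
    then show "map f ls ! i = xs ! i" using fk[OF i] by (simp add: ls_def)
  qed
  have "lam (L, R) = filter (\<lambda>k. 0 < k) (map f ls)" unfolding lam_def f_def using sls by simp
  also have "\<dots> = xs" using mf part unfolding integer_partition_def
    by (auto simp: filter_id_conv)
  finally show ?thesis using el LR by simp
qed

theorem proposition3p11:
  fixes lam0 :: "nat list"
  assumes "integer_partition lam0"
  shows "\<exists>!LR. elementary LR \<and> lam LR = lam0"
  using canon_works[OF assms] canon_unique[OF assms] by blast

end
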